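(* Let $X$ be a compact metric space and $f:X\to X$ a local homeomorphism. Suppose there is a full zip shift map $\sigma_\tau:\Sigma\to\Sigma$ and a homeomorphism $\phi:X\to\Sigma$ with $f=\phi^{-1}\circ\sigma_\tau\circ\phi$. Then $f$ is expansive.
   Context: Given finite nonempty alphabets $S,Z$ with $\#Z\le\#S$ and a surjection $\tau:S\to Z$, the zip shift space $\Sigma=\Sigma_{Z,S}$ is the set of bi-infinite sequences $x=(x_i)_{i\in\mathbb{Z}}$ with $x_i\in S$ for $i\ge0$ and $x_i\in Z$ for $i<0$, with metric $d(x,y)=2^{-M(x,y)}$, $M(x,y)=\min\{|i|:x_i\neq y_i\}$; the zip shift map is $(\sigma_\tau x)_i=x_{i+1}$ for $i\neq-1$, $(\sigma_\tau x)_{-1}=\tau(x_0)$. A local homeomorphism $f:X\to X$ of a compact metric space $(X,d_X)$ is expansive if there is $e>0$ such that for any $x\neq y$ in $X$ there exists $n\in\mathbb{Z}$ with $d_X(f^n(x),f^n(y))>e$, where for $n<0$, $f^n(x)$, $f^n(y)$ denote the sets of $|n|$-th preimages and the distance is the minimum distance between these sets. *)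

theory Defs
  imports "HOL-Analysis.Analysis"
begin

definition zip_space :: "'a set \<Rightarrow> 'a set \<Rightarrow> (int \<Rightarrow> 'a) set" where
  "zip_space Z S = {x. (\<forall>i\<ge>0. x i \<in> S) \<and> (\<forall>i<0. x i \<in> Z)}"

definition zip_shift :: "('a \<Rightarrow> 'a) \<Rightarrow> (int \<Rightarrow> 'a) \<Rightarrow> (int \<Rightarrow> 'a)" where
  "zip_shift \<tau> x = (\<lambda>i. if i = -1 then \<tau> (x 0) else x (i + 1))"

definition zip_M :: "(int \<Rightarrow> 'a) \<Rightarrow> (int \<Rightarrow> 'a) \<Rightarrow> nat" where
  "zip_M x y = (LEAST m. \<exists>i. nat \<bar>i\<bar> = m \<and> x i \<noteq> y i)"

definition zip_dist :: "(int \<Rightarrow> 'a) \<Rightarrow> (int \<Rightarrow> 'a) \<Rightarrow> real" where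
  "zip_dist x y = (if x = y then 0 else (1/2) ^ zip_M x y)"

definition zip_topology :: "'a set \<Rightarrow> 'a set \<Rightarrow> (int \<Rightarrow> 'a) topology" where
  "zip_topology Z S = Metric_space.mtopology (zip_space Z S) zip_dist"

definition local_homeo_on :: "'b::metric_space set \<Rightarrow> ('b \<Rightarrow> 'b) \<Rightarrow> bool" where
  "local_homeo_on X f \<longleftrightarrow> f ` X \<subseteq> X \<and>
     (\<forall>x\<in>X. \<exists>U g. x \<in> U \<and> openin (top_of_set X) U \<and> openin (top_of_set X) (f ` U)
                 \<and> homeomorphism U (f ` U) f g)"

definition expansive_on :: "'b::metric_space set \<Rightarrow> ('b \<Rightarrow> 'b) \<Rightarrow> bool" where
  "expansive_on X f \<longleftrightarrow> (\<exists>e>0. \<forall>x\<in>X. \<forall>y\<in>X. x \<noteq> y \<longrightarrow>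
     (\<exists>n::int. (if n \<ge> 0 then dist ((f ^^ nat n) x) ((f ^^ nat n) y)
                else setdist {z\<in>X. (f ^^ nat (-n)) z = x} {z\<in>X. (f ^^ nat (-n)) z = y}) > e))"

end

theory Submission
  imports Defs
begin

lemma zip_M_le: "x i \<noteq> y i \<Longrightarrow> zip_M x y \<le> nat \<bar>i\<bar>"
  unfolding zip_M_def by (rule Least_le) blast

lemma zip_M_ex: "x \<noteq> y \<Longrightarrow> \<exists>i. nat \<bar>i\<bar> = zip_M x y \<and> x i \<noteq> y i"
  unfolding zip_M_def by (rule LeastI_ex) (auto simp: fun_eq_iff)

lemma zip_M_commute: "zip_M x y = zip_M y x"
  unfolding zip_M_def by (intro arg_cong[where f=Least] ext) (simp add: eq_commute[of "x _"])

lemma zip_metric: "Metric_space M zip_dist"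
proof
  fix x y z :: "int \<Rightarrow> 'a"
  show "0 \<le> zip_dist x y" by (simp add: zip_dist_def)
  show "zip_dist x y = zip_dist y x"
    unfolding zip_dist_def using zip_M_commute[of x y] by simp
  show "zip_dist x y = 0 \<longleftrightarrow> x = y" by (simp add: zip_dist_def)
  show "zip_dist x z \<le> zip_dist x y + zip_dist y z"
  proof (cases "x = z \<or> x = y \<or> y = z")
    case True
    have nn: "0 \<le> zip_dist u v" for u v :: "int \<Rightarrow> 'a" by (simp add: zip_dist_def)
    from True consider "x = z" | "x = y" | "y = z" by blast
    then show ?thesis
    proof cases
      case 1 then show ?thesis using nn[of x y] nn[of y z] by (simp add: zip_dist_def)
    next
      case 2 then show ?thesis using nn[of y z] by (simp add: zip_dist_def)
    next
      case 3 then show ?thesis using nn[of x y] by (simp add: zip_dist_def)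
    qed
  next
    case False
    then have ne: "x \<noteq> z" "x \<noteq> y" "y \<noteq> z" by auto
    obtain i where i: "nat \<bar>i\<bar> = zip_M x z" "x i \<noteq> z i" using zip_M_ex[OF ne(1)] by blast
    have "x i \<noteq> y i \<or> y i \<noteq> z i" using i(2) by metis
    then have "zip_M x y \<le> zip_M x z \<or> zip_M y z \<le> zip_M x z"
      using i(1) zip_M_le[of x i y] zip_M_le[of y i z] by linarith
    then have "(1/2::real) ^ zip_M x z \<le> (1/2) ^ zip_M x y \<or> (1/2::real) ^ zip_M x z \<le> (1/2) ^ zip_M y z"
      using power_decreasing[of _ _ "1/2::real"] by auto
    moreover have "(0::real) \<le> (1/2) ^ zip_M x y" "(0::real) \<le> (1/2) ^ zip_M y z" by auto
    ultimately have "(1/2::real) ^ zip_M x z \<le> (1/2) ^ zip_M x y + (1/2) ^ zip_M y z" by linarith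
    then show ?thesis using ne by (simp add: zip_dist_def)
  qed
qed

lemma cyl_open: "openin (zip_topology Z S) {w \<in> zip_space Z S. w 0 = s}"
proof -
  interpret Metric_space "zip_space Z S" zip_dist by (rule zip_metric)
  show ?thesis
    unfolding zip_topology_def openin_mtopology
  proof (intro conjI allI impI)
    fix w assume w: "w \<in> {w \<in> zip_space Z S. w 0 = s}"
    have "mball w 1 \<subseteq> {w \<in> zip_space Z S. w 0 = s}"
    proof
      fix v assume v: "v \<in> mball w 1"
      have "w 0 = v 0"
      proof (rule ccontr)
        assume "w 0 \<noteq> v 0"
        then have "zip_M w v = 0" using zip_M_le[of w 0 v] by simp
        then show False using v \<open>w 0 \<noteq> v 0\<close> by (auto simp: zip_dist_def split: if_splits)
      qed
      then show "v \<in> {w \<in> zip_space Z S. w 0 = s}" using v w by auto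
    qed
    then show "\<exists>r>0. mball w r \<subseteq> {w \<in> zip_space Z S. w 0 = s}" by (intro exI[of _ 1]) auto
  qed auto
qed

lemma zip_iter: "(zip_shift \<tau> ^^ n) w j =
   (if j \<ge> 0 then w (j + int n) else if j + int n \<ge> 0 then \<tau> (w (j + int n)) else w (j + int n))"
proof (induction n arbitrary: w)
  case 0 then show ?case by simp
next
  case (Suc n)
  have e1: "(zip_shift \<tau> ^^ Suc n) w j = (zip_shift \<tau> ^^ n) (zip_shift \<tau> w) j"
    by (simp only: funpow_Suc_right o_apply)
  have sn: "j + int (Suc n) = (j + int n) + 1" by simp
  show ?case
  proof (cases "j \<ge> 0")
    case True
    then have "j + int n \<noteq> -1" by simp
    then show ?thesis unfolding e1 Suc sn using True by (simp add: zip_shift_def)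
  next
    case False
    show ?thesis
    proof (cases "j + int n \<ge> 0")
      case True
      then have "j + int n \<noteq> -1" by simp
      then show ?thesis unfolding e1 Suc sn using True False by (simp add: zip_shift_def)
    next
      case F2: False
      show ?thesis
      proof (cases "j + int n = -1")
        case True
        then have "j + int n + 1 = 0" by simp
        then show ?thesis unfolding e1 Suc sn using True False by (simp add: zip_shift_def)
      next
        case F3: False
        then have "\<not> 0 \<le> j + int n + 1" using F2 by simp
        then show ?thesis unfolding e1 Suc sn using F3 F2 False by (simp add: zip_shift_def)
      qed
    qed
  qed
qed

lemma zip_shift_space:
  assumes "\<tau> ` S = Z" "w \<in> zip_space Z S"
  shows "zip_shift \<tau> w \<in> zip_space Z S"
proof -
  have S: "\<And>i. i \<ge> 0 \<Longrightarrow> w i \<in> S" and Z: "\<And>i. i < 0 \<Longrightarrow> w i \<in> Z"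
    using assms(2) unfolding zip_space_def by blast+
  have "zip_shift \<tau> w i \<in> S" if "i \<ge> 0" for i
    using S[of "i+1"] that unfolding zip_shift_def by simp
  moreover have "zip_shift \<tau> w i \<in> Z" if "i < 0" for i
  proof (cases "i = -1")
    case True
    have "\<tau> (w 0) \<in> Z" using S[of 0] assms(1) by (metis imageI order_refl)
    with True show ?thesis unfolding zip_shift_def by simp
  next
    case False then show ?thesis using Z[of "i+1"] that unfolding zip_shift_def by simp
  qed
  ultimately show ?thesis unfolding zip_space_def by blast
qed

lemma zip_shift_surj:
  assumes "\<tau> ` S = Z" "w \<in> zip_space Z S"
  shows "\<exists>v\<in>zip_space Z S. zip_shift \<tau> v = w"
proof -
  have S: "\<And>i. i \<ge> 0 \<Longrightarrow> w i \<in> S" and Z: "\<And>i. i < 0 \<Longrightarrow> w i \<in> Z"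
    using assms(2) unfolding zip_space_def by blast+
  have "w (-1) \<in> \<tau> ` S" using Z[of "-1"] assms(1) by simp
  then obtain s where s: "s \<in> S" "w (-1) = \<tau> s" by (rule imageE)
  define v where "v = (\<lambda>i. if i = 0 then s else w (i - 1))"
  have "v i \<in> S" if "i \<ge> 0" for i
    using s S[of "i - 1"] that unfolding v_def by simp
  moreover have "v i \<in> Z" if "i < 0" for i
    using Z[of "i - 1"] that unfolding v_def by simp
  ultimately have "v \<in> zip_space Z S" unfolding zip_space_def by blast
  moreover have "zip_shift \<tau> v = w"
    using s unfolding v_def zip_shift_def fun_eq_iff by simp
  ultimately show ?thesis by blast
qed

theorem proposition2:
  fixes X :: "'b::metric_space set" and f :: "'b \<Rightarrow> 'b"
    and S Z :: "'a set" and \<tau> :: "'a \<Rightarrow> 'a" and \<phi> :: "'b \<Rightarrow> (int \<Rightarrow> 'a)"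
  assumes "compact X"
    and "local_homeo_on X f"
    and "finite S" "S \<noteq> {}" "finite Z" "Z \<noteq> {}" "card Z \<le> card S"
    and "\<tau> ` S = Z"
    and "homeomorphic_map (top_of_set X) (zip_topology Z S) \<phi>"
    and "\<forall>x\<in>X. f x = inv_into X \<phi> (zip_shift \<tau> (\<phi> x))"
  shows "expansive_on X f"
proof -
  interpret Metric_space "zip_space Z S" zip_dist by (rule zip_metric)
  note hm = assms(9)
  have top: "topspace (zip_topology Z S) = zip_space Z S"
    unfolding zip_topology_def by simp
  have img: "\<phi> ` X = zip_space Z S"
    using homeomorphic_imp_surjective_map[OF hm] top by simp
  have inj: "inj_on \<phi> X"
    using homeomorphic_imp_injective_map[OF hm] by simp
  have cont: "continuous_map (top_of_set X) (zip_topology Z S) \<phi>"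
    by (rule homeomorphic_imp_continuous_map[OF hm])
  have f1: "f a \<in> X \<and> \<phi> (f a) = zip_shift \<tau> (\<phi> a)" if "a \<in> X" for a
  proof -
    have "zip_shift \<tau> (\<phi> a) \<in> \<phi> ` X"
      using zip_shift_space[OF assms(8)] img that by (metis imageI)
    then show ?thesis using assms(10) that by (simp add: inv_into_into f_inv_into_f)
  qed
  have fn: "(f ^^ n) a \<in> X \<and> \<phi> ((f ^^ n) a) = (zip_shift \<tau> ^^ n) (\<phi> a)" if "a \<in> X" for a n
    using that by (induction n) (auto simp: f1)
  have pre: "\<exists>z\<in>X. (f ^^ k) z = x" if "x \<in> X" for x k
    using that
  proof (induction k arbitrary: x)
    case 0 then show ?case by auto
  next
    case (Suc k)
    have "\<phi> x \<in> zip_space Z S" using img Suc.prems by blast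
    then obtain v where v: "v \<in> zip_space Z S" "zip_shift \<tau> v = \<phi> x"
      using zip_shift_surj[OF assms(8)] by blast
    obtain y where y: "y \<in> X" "\<phi> y = v" using v img by (metis imageE)
    have "\<phi> (f y) = \<phi> x" using f1[OF y(1)] y v by simp
    then have "f y = x" using inj f1[OF y(1)] Suc.prems by (meson inj_onD)
    obtain z where "z \<in> X" "(f ^^ k) z = y" using Suc.IH[OF y(1)] by blast
    then show ?case using \<open>f y = x\<close> by (intro bexI[of _ z]) auto
  qed
  define g where "g a = \<phi> a 0" for a
  have loc: "\<exists>r>0. \<forall>b\<in>X. dist b a < r \<longrightarrow> g b = g a" if aX: "a \<in> X" for a
  proof -
    define P where "P = {b \<in> X. \<phi> b \<in> {w \<in> zip_space Z S. w 0 = g a}}"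
    have "openin (top_of_set X) {b \<in> topspace (top_of_set X). \<phi> b \<in> {w \<in> zip_space Z S. w 0 = g a}}"
      by (rule openin_continuous_map_preimage[OF cont cyl_open])
    then have o: "openin (top_of_set X) P" unfolding P_def by simp
    have am: "a \<in> P" using aX img unfolding P_def g_def by auto
    have "\<forall>x\<in>P. \<exists>e>0. \<forall>x'\<in>X. dist x' x < e \<longrightarrow> x' \<in> P"
      using o[unfolded openin_euclidean_subtopology_iff] by (rule conjunct2)
    then obtain r where r: "r > 0" "\<forall>x'\<in>X. dist x' a < r \<longrightarrow> x' \<in> P"
      using am by blast
    have "\<forall>b\<in>X. dist b a < r \<longrightarrow> g b = g a"
    proof (intro ballI impI)
      fix b assume "b \<in> X" "dist b a < r"
      then have "b \<in> P" using r(2) by blast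
      then show "g b = g a" unfolding P_def g_def by simp
    qed
    then show ?thesis using r(1) by blast
  qed
  define G where "G = {U. open U \<and> (\<forall>b\<in>U \<inter> X. \<forall>c\<in>U \<inter> X. g b = g c)}"
  have cov: "X \<subseteq> \<Union>G"
  proof
    fix a assume a: "a \<in> X"
    obtain r where r: "r > 0" "\<forall>b\<in>X. dist b a < r \<longrightarrow> g b = g a" using loc[OF a] by blast
    have "ball a r \<in> G" unfolding G_def using r by (auto simp: dist_commute)
    moreover have "a \<in> ball a r" using r(1) by simp
    ultimately show "a \<in> \<Union>G" by (rule UnionI)
  qed
  obtain e where e: "e > 0" "\<And>x. x \<in> X \<Longrightarrow> \<exists>U\<in>G. ball x e \<subseteq> U"
    using Heine_Borel_lemma[OF assms(1) cov] G_def by blast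
  have sep: "e \<le> dist a b" if ab: "a \<in> X" "b \<in> X" "g a \<noteq> g b" for a b
  proof (rule ccontr)
    assume "\<not> e \<le> dist a b"
    then have "b \<in> ball a e" by simp
    moreover obtain U where "U \<in> G" "ball a e \<subseteq> U" using e(2) ab(1) by blast
    ultimately have "a \<in> U" "b \<in> U" using e(1) by auto
    moreover have "\<forall>b\<in>U \<inter> X. \<forall>c\<in>U \<inter> X. g b = g c" using \<open>U \<in> G\<close> unfolding G_def by blast
    ultimately show False using ab by blast
  qed
  show ?thesis
    unfolding expansive_on_def
  proof (intro exI[of _ "e/2"] conjI ballI impI)
    show "e/2 > 0" using e by simp
    fix x y assume x: "x \<in> X" and y: "y \<in> X" and xy: "x \<noteq> y"
    have pxy: "\<phi> x \<noteq> \<phi> y" using inj x y xy by (meson inj_onD)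
    show "\<exists>n::int. (if n \<ge> 0 then dist ((f ^^ nat n) x) ((f ^^ nat n) y)
                else setdist {z\<in>X. (f ^^ nat (-n)) z = x} {z\<in>X. (f ^^ nat (-n)) z = y}) > e/2"
    proof (cases "\<exists>i\<ge>0. \<phi> x i \<noteq> \<phi> y i")
      case True
      then obtain i where i: "i \<ge> 0" "\<phi> x i \<noteq> \<phi> y i" by blast
      have "g ((f ^^ nat i) x) \<noteq> g ((f ^^ nat i) y)"
        using fn[OF x, of "nat i"] fn[OF y, of "nat i"] i unfolding g_def by (simp add: zip_iter)
      then have "e \<le> dist ((f ^^ nat i) x) ((f ^^ nat i) y)"
        using sep[of "(f ^^ nat i) x" "(f ^^ nat i) y"] fn[OF x, of "nat i"] fn[OF y, of "nat i"] by blast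
      then have "(if i \<ge> 0 then dist ((f ^^ nat i) x) ((f ^^ nat i) y)
                else setdist {z\<in>X. (f ^^ nat (-i)) z = x} {z\<in>X. (f ^^ nat (-i)) z = y}) > e/2"
        using i(1) e(1) by simp
      then show ?thesis by (rule exI)
    next
      case False
      obtain i where i0: "\<phi> x i \<noteq> \<phi> y i" using pxy by (auto simp: fun_eq_iff)
      have "i < 0"
      proof (rule ccontr)
        assume "\<not> i < 0"
        then have "i \<ge> 0" by simp
        with False i0 show False by blast
      qed
      note i = this i0
      define k where "k = nat (- i)"
      have ik: "i + int k = 0" using i unfolding k_def by simp
      have "e \<le> setdist {z\<in>X. (f ^^ k) z = x} {z\<in>X. (f ^^ k) z = y}"
        unfolding le_setdist_iff
      proof (intro conjI ballI impI)
        fix z z' assume z: "z \<in> {z\<in>X. (f ^^ k) z = x}" and z': "z' \<in> {z\<in>X. (f ^^ k) z = y}"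
        have zx: "\<phi> x = (zip_shift \<tau> ^^ k) (\<phi> z)" using fn[of z k] z by simp
        have zy: "\<phi> y = (zip_shift \<tau> ^^ k) (\<phi> z')" using fn[of z' k] z' by simp
        have "\<phi> x i = \<tau> (g z)" unfolding zx g_def zip_iter using i(1) ik by simp
        moreover have "\<phi> y i = \<tau> (g z')" unfolding zy g_def zip_iter using i(1) ik by simp
        ultimately have "g z \<noteq> g z'" using i by auto
        then show "e \<le> dist z z'" using z z' by (intro sep) simp_all
      next
        assume "{z\<in>X. (f ^^ k) z = x} = {} \<or> {z\<in>X. (f ^^ k) z = y} = {}"
        then show "e \<le> 0" using pre[OF x, of k] pre[OF y, of k] by auto
      qed
      then have "(if i \<ge> 0 then dist ((f ^^ nat i) x) ((f ^^ nat i) y)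
                else setdist {z\<in>X. (f ^^ nat (-i)) z = x} {z\<in>X. (f ^^ nat (-i)) z = y}) > e/2"
        using i(1) e(1) unfolding k_def by simp
      then show ?thesis by (rule exI)
    qed
  qed
qed

end
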